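(* Let $A$ be a Nakayama algebra of finite global dimension. Then the magnitude $m_A$ equals the number of simple $A$-modules of even projective dimension, and also equals the number of vertices lying on a cycle in the resolution quiver of $A$.
   Context: Nakayama algebras are connected finite-dimensional algebras over an algebraically closed field $K$ all of whose indecomposable modules are uniserial, given as bound quiver algebras on a linear quiver $0\to\cdots\to n-1$ or cyclic quiver $0\to\cdots\to n-1\to 0$ with admissible relations; the Kupisch series is $[c_0,\dots,c_{n-1}]$ with $c_i=\dim_K e_iA$. The Cartan matrix $\mathbf C_A$ has entries $\dim_K e_iAe_j$; for $A$ of finite global dimension it is invertible, and the magnitude $m_A$ is the sum of all entries of $\mathbf C_A^{-1}$. The resolution quiver of $A$ has vertex set $\mathbb Z/n\mathbb Z$ and an arrow $i\to j$ whenever $j\equiv i+c_i \pmod n$. *)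

theory Defs
  imports "Jordan_Normal_Form.Matrix"
begin

text \<open>A Nakayama algebra with n simple modules (vertices 0,...,n-1) is encoded by its
Kupisch series c 0, ..., c (n-1), where c i = dim e_i A.  Conventions (arrows i -> i+1):
the indecomposable projective e_i A is uniserial with composition factors
S_i, S_(i+1), ..., S_(i + c i - 1) (indices mod n).\<close>

definition kupisch_linear :: "nat \<Rightarrow> (nat \<Rightarrow> nat) \<Rightarrow> bool" where
  "kupisch_linear n c \<longleftrightarrow> n \<ge> 1 \<and> c (n - 1) = 1 \<and>
     (\<forall>i < n - 1. c i \<ge> 2 \<and> c (Suc i) + 1 \<ge> c i)"

definition kupisch_cyclic :: "nat \<Rightarrow> (nat \<Rightarrow> nat) \<Rightarrow> bool" where
  "kupisch_cyclic n c \<longleftrightarrow> n \<ge> 1 \<and>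
     (\<forall>i < n. c i \<ge> 2 \<and> c (Suc i mod n) + 1 \<ge> c i)"

definition nakayama_kupisch :: "nat \<Rightarrow> (nat \<Rightarrow> nat) \<Rightarrow> bool" where
  "nakayama_kupisch n c \<longleftrightarrow> kupisch_linear n c \<or> kupisch_cyclic n c"

text \<open>Cartan matrix: entry (i,j) = dim e_i A e_j = multiplicity of S_j in e_i A.\<close>
definition cartan :: "nat \<Rightarrow> (nat \<Rightarrow> nat) \<Rightarrow> rat mat" where
  "cartan n c = mat n n (\<lambda>(i, j). of_nat (card {k. k < c i \<and> (i + k) mod n = j}))"

definition magnitude :: "nat \<Rightarrow> (nat \<Rightarrow> nat) \<Rightarrow> rat" where
  "magnitude n c = (let B = (SOME B. B \<in> carrier_mat n n \<and> inverts_mat (cartan n c) B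
                                  \<and> inverts_mat B (cartan n c))
                    in \<Sum>i<n. \<Sum>j<n. B $$ (i, j))"

text \<open>Indecomposable modules are the uniserial modules M(i,l) with top S_i and length l,
1 <= l <= c i; the pair (i,0) represents the zero module.  The projective cover of M(i,l)
is e_i A = M(i, c i), and the syzygy is Omega M(i,l) = M(i+l mod n, c i - l).\<close>
definition syzygy :: "nat \<Rightarrow> (nat \<Rightarrow> nat) \<Rightarrow> nat \<times> nat \<Rightarrow> nat \<times> nat" where
  "syzygy n c M = (case M of (i, l) \<Rightarrow>
      if l = 0 then (i, 0) else ((i + l) mod n, c i - l))"

definition pd_le :: "nat \<Rightarrow> (nat \<Rightarrow> nat) \<Rightarrow> nat \<times> nat \<Rightarrow> nat \<Rightarrow> bool" where
  "pd_le n c M d \<longleftrightarrow> snd ((syzygy n c ^^ Suc d) M) = 0"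

definition proj_dim :: "nat \<Rightarrow> (nat \<Rightarrow> nat) \<Rightarrow> nat \<times> nat \<Rightarrow> nat" where
  "proj_dim n c M = (LEAST d. pd_le n c M d)"

definition finite_gldim :: "nat \<Rightarrow> (nat \<Rightarrow> nat) \<Rightarrow> bool" where
  "finite_gldim n c \<longleftrightarrow> (\<exists>d. \<forall>i < n. \<forall>l \<in> {1..c i}. pd_le n c (i, l) d)"

text \<open>Simple module S_i = M(i,1).\<close>
definition simples_even_pd :: "nat \<Rightarrow> (nat \<Rightarrow> nat) \<Rightarrow> nat set" where
  "simples_even_pd n c = {i. i < n \<and> even (proj_dim n c (i, 1))}"

text \<open>Resolution quiver: vertex set Z/nZ (represented by 0..n-1), arrow i -> (i + c i) mod n.\<close>
definition res_map :: "nat \<Rightarrow> (nat \<Rightarrow> nat) \<Rightarrow> nat \<Rightarrow> nat" where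
  "res_map n c i = (i + c i) mod n"

definition cyclic_vertices :: "nat \<Rightarrow> (nat \<Rightarrow> nat) \<Rightarrow> nat set" where
  "cyclic_vertices n c = {i. i < n \<and> (\<exists>k \<ge> 1. (res_map n c ^^ k) i = i)}"

end

theory Submission
  imports Defs "Jordan_Normal_Form.Determinant"
begin


locale kup =
  fixes n :: nat and c :: "nat \<Rightarrow> nat"
  assumes npos: "0 < n" and cpos: "\<And>i. i < n \<Longrightarrow> 1 \<le> c i"
    and cstep: "\<And>i. i < n \<Longrightarrow> c i \<le> c (Suc i mod n) + 1"
begin

definition F :: "nat \<Rightarrow> nat" where "F x = x + c (x mod n)"

lemma F_gt: "x < F x"
  using cpos[of "x mod n"] npos by (simp add: F_def)

lemma F_Suc: "F x \<le> F (Suc x)"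
proof -
  have "Suc x mod n = Suc (x mod n) mod n" by (simp add: mod_Suc_eq)
  then show ?thesis using cstep[of "x mod n"] npos by (simp add: F_def)
qed

lemma F_mono: "x \<le> y \<Longrightarrow> F x \<le> F y"
  using F_Suc by (rule lift_Suc_mono_le)

lemma Fk_mono: "x \<le> y \<Longrightarrow> (F^^k) x \<le> (F^^k) y"
  by (induction k) (auto intro: F_mono)

lemma Fk_ge: "x + k \<le> (F^^k) x"
proof (induction k)
  case (Suc k) then show ?case using F_gt[of "(F^^k) x"] by simp
qed simp

lemma Fk_strict: "j < k \<Longrightarrow> (F^^j) x < (F^^k) x"
proof (induction k)
  case (Suc k)
  then have "(F^^j) x \<le> (F^^k) x" by (cases "j = k") auto
  then show ?case using F_gt[of "(F^^k) x"] by simp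
qed simp

lemma F_shift: "F (x + t*n) = F x + t*n"
  by (simp add: F_def)

lemma Fk_shift: "(F^^k) (x + t*n) = (F^^k) x + t*n"
  by (induction k) (auto simp: F_shift)

lemma F_mod: "F x mod n = res_map n c (x mod n)"
  by (simp add: F_def res_map_def mod_add_left_eq)

lemma Fk_mod: "(F^^k) x mod n = (res_map n c ^^ k) (x mod n)"
  by (induction k) (auto simp: F_mod)

fun xs :: "nat \<Rightarrow> nat \<Rightarrow> nat" where
  "xs a 0 = a" | "xs a (Suc 0) = Suc a" | "xs a (Suc (Suc t)) = F (xs a t)"

lemma xs_mono2: "xs a t \<le> xs a (Suc t) \<and> xs a (Suc t) \<le> xs a (Suc (Suc t))"
proof (induction t)
  case 0 then show ?case using F_gt[of a] by simp
next
  case (Suc t) then show ?case using F_mono by simp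
qed

lemma xs_mono: "xs a t \<le> xs a (Suc t)"
  using xs_mono2 by blast

end

context kup begin

lemma syz_zero: "snd M = 0 \<Longrightarrow> syzygy n c M = M"
  by (cases M) (simp add: syzygy_def)

lemma syz_zero_pow: "snd ((syzygy n c ^^ t) M) = 0 \<Longrightarrow> snd ((syzygy n c ^^ (t + s)) M) = 0"
proof (induction s)
  case (Suc s)
  then show ?case using syz_zero[of "(syzygy n c ^^ (t + s)) M"] by simp
qed simp

lemma syz_xs: "(\<forall>s<t. xs a s < xs a (Suc s)) \<Longrightarrow>
   (syzygy n c ^^ t) (a mod n, 1) = (xs a t mod n, xs a (Suc t) - xs a t)"
proof (induction t)
  case 0 then show ?case by simp
next
  case (Suc t)
  then have IH: "(syzygy n c ^^ t) (a mod n, 1) = (xs a t mod n, xs a (Suc t) - xs a t)" by auto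
  have lt: "xs a t < xs a (Suc t)" using Suc.prems by auto
  have m2: "xs a (Suc t) \<le> xs a (Suc (Suc t))" using xs_mono by blast
  have e1: "(xs a t mod n + (xs a (Suc t) - xs a t)) mod n = xs a (Suc t) mod n"
  proof -
    have "(xs a t mod n + (xs a (Suc t) - xs a t)) mod n = (xs a t + (xs a (Suc t) - xs a t)) mod n"
      by (rule mod_add_left_eq)
    also have "xs a t + (xs a (Suc t) - xs a t) = xs a (Suc t)" using lt by simp
    finally show ?thesis .
  qed
  have e2: "c (xs a t mod n) - (xs a (Suc t) - xs a t) = xs a (Suc (Suc t)) - xs a (Suc t)"
    using lt m2 by (simp add: F_def)
  have ne: "xs a (Suc t) - xs a t \<noteq> 0" using lt by simp
  have "(syzygy n c ^^ Suc t) (a mod n, 1) = syzygy n c (xs a t mod n, xs a (Suc t) - xs a t)"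
    using IH by simp
  also have "\<dots> = ((xs a t mod n + (xs a (Suc t) - xs a t)) mod n, c (xs a t mod n) - (xs a (Suc t) - xs a t))"
    using ne unfolding syzygy_def by simp
  also have "\<dots> = (xs a (Suc t) mod n, xs a (Suc (Suc t)) - xs a (Suc t))" using e1 e2 by simp
  finally show ?case .
qed

lemma syz_zero_iff: "snd ((syzygy n c ^^ t) (a mod n, 1)) = 0 \<longleftrightarrow> (\<exists>s\<le>t. xs a s = xs a (Suc s))"
proof
  assume h: "snd ((syzygy n c ^^ t) (a mod n, 1)) = 0"
  show "\<exists>s\<le>t. xs a s = xs a (Suc s)"
  proof (rule ccontr)
    assume "\<not> ?thesis"
    then have A: "\<forall>s\<le>t. xs a s < xs a (Suc s)" using xs_mono le_neq_implies_less by blast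
    then have "(syzygy n c ^^ t) (a mod n, 1) = (xs a t mod n, xs a (Suc t) - xs a t)"
      using syz_xs by simp
    with h A show False by auto
  qed
next
  assume "\<exists>s\<le>t. xs a s = xs a (Suc s)"
  then have ex: "\<exists>s. s \<le> t \<and> xs a s = xs a (Suc s)" by blast
  define s where "s = (LEAST s. s \<le> t \<and> xs a s = xs a (Suc s))"
  have s1: "s \<le> t \<and> xs a s = xs a (Suc s)" unfolding s_def using ex by (rule LeastI_ex)
  have s2: "\<forall>s'<s. xs a s' \<noteq> xs a (Suc s')"
  proof (intro allI impI)
    fix s' assume "s' < s"
    then have "\<not> (s' \<le> t \<and> xs a s' = xs a (Suc s'))" unfolding s_def by (rule not_less_Least)
    then show "xs a s' \<noteq> xs a (Suc s')" using \<open>s' < s\<close> s1 by auto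
  qed
  then have "\<forall>s'<s. xs a s' < xs a (Suc s')" using xs_mono le_neq_implies_less by blast
  then have "snd ((syzygy n c ^^ s) (a mod n, 1)) = 0" using syz_xs s1 by simp
  then have "snd ((syzygy n c ^^ (s + (t - s))) (a mod n, 1)) = 0" by (rule syz_zero_pow)
  then show "snd ((syzygy n c ^^ t) (a mod n, 1)) = 0" using s1 by simp
qed

lemma pd_le_iff: "pd_le n c (a mod n, 1) d \<longleftrightarrow> (\<exists>s\<le>Suc d. xs a s = xs a (Suc s))"
  unfolding pd_le_def by (rule syz_zero_iff)

lemma xs_01: "xs a 0 < xs a (Suc 0)" by simp

definition mu :: "nat \<Rightarrow> nat" where "mu a = (LEAST s. xs a s = xs a (Suc s))"

lemma gl_merge:
  assumes "finite_gldim n c"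
  shows "\<exists>s. xs a s = xs a (Suc s)"
proof -
  obtain d where d: "\<forall>i<n. \<forall>l\<in>{1..c i}. pd_le n c (i, l) d"
    using assms unfolding finite_gldim_def by blast
  have "a mod n < n" using npos by simp
  then have "pd_le n c (a mod n, 1) d" using d cpos by auto
  then show ?thesis using pd_le_iff by blast
qed

lemma mu_props:
  assumes "finite_gldim n c"
  shows "xs a (mu a) = xs a (Suc (mu a))" "\<And>s. s < mu a \<Longrightarrow> xs a s < xs a (Suc s)" "1 \<le> mu a"
proof -
  show 1: "xs a (mu a) = xs a (Suc (mu a))" unfolding mu_def using gl_merge[OF assms]
    by (rule LeastI_ex)
  show "xs a s < xs a (Suc s)" if "s < mu a" for s
    using not_less_Least[of s "\<lambda>s. xs a s = xs a (Suc s)"] that xs_mono[of a s] unfolding mu_def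
    by simp
  show "1 \<le> mu a" using 1 by (cases "mu a") auto
qed

lemma proj_dim_mu:
  assumes "finite_gldim n c"
  shows "proj_dim n c (a mod n, 1) = mu a - 1"
  unfolding proj_dim_def
proof (rule Least_equality)
  have "Suc (mu a - 1) = mu a" using mu_props(3)[OF assms, of a] by simp
  then show "pd_le n c (a mod n, 1) (mu a - 1)" using pd_le_iff mu_props(1)[OF assms, of a] by auto
next
  fix d assume "pd_le n c (a mod n, 1) d"
  then obtain s where s: "s \<le> Suc d" "xs a s = xs a (Suc s)" using pd_le_iff by blast
  then have "mu a \<le> s" using mu_props(2)[OF assms, of s a] by (metis leI less_irrefl)
  then show "mu a - 1 \<le> d" using s by simp
qed

end


lemma card_filter_sum: "finite A \<Longrightarrow> (of_nat (card {x\<in>A. P x}) :: 'a::semiring_1) = (\<Sum>x\<in>A. if P x then 1 else 0)"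
proof -
  assume fin: "finite A"
  have "(\<Sum>x\<in>{x\<in>A. P x}. (1::'a)) = (\<Sum>x\<in>A. if P x then 1 else 0)"
    by (rule sum.inter_filter[OF fin])
  then show ?thesis by simp
qed

lemma alt_sum: "(\<Sum>t<K. (-1::rat)^t) = (if odd K then 1 else 0)"
  by (induction K) auto

context kup begin

definition dv :: "nat \<Rightarrow> nat \<Rightarrow> nat \<Rightarrow> rat" where
  "dv a b j = (\<Sum>s\<in>{a..<b}. if s mod n = j then 1 else 0)"

lemma dv_add: "a \<le> b \<Longrightarrow> b \<le> d \<Longrightarrow> dv a d j = dv a b j + dv b d j"
  unfolding dv_def by (simp add: sum.atLeastLessThan_concat)

lemma cartan_entry: "r < n \<Longrightarrow> j < n \<Longrightarrow>
   cartan n c $$ (r, j) = (\<Sum>k<c r. if (r + k) mod n = j then 1 else 0)"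
proof -
  assume "r < n" "j < n"
  have st: "{k. k < c r \<and> (r + k) mod n = j} = {k\<in>{..<c r}. (r + k) mod n = j}" by auto
  have "cartan n c $$ (r, j) = of_nat (card {k. k < c r \<and> (r + k) mod n = j})"
    unfolding cartan_def using \<open>r < n\<close> \<open>j < n\<close> by simp
  also have "\<dots> = of_nat (card {k\<in>{..<c r}. (r + k) mod n = j})" by (simp only: st)
  also have "\<dots> = (\<Sum>k<c r. if (r + k) mod n = j then 1 else 0)"
    by (rule card_filter_sum) simp
  finally show ?thesis .
qed

lemma cartan_dv: "j < n \<Longrightarrow> cartan n c $$ (x mod n, j) = dv x (F x) j"
proof -
  assume j: "j < n"
  have xm: "x mod n < n" using npos by simp
  have "dv x (F x) j = (\<Sum>s\<in>{0 + x..<c (x mod n) + x}. if s mod n = j then 1 else 0)"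
    unfolding dv_def F_def by (simp add: add.commute)
  also have "\<dots> = (\<Sum>k\<in>{0..<c (x mod n)}. if (k + x) mod n = j then 1 else 0)"
    by (rule sum.shift_bounds_nat_ivl)
  also have "\<dots> = (\<Sum>k<c (x mod n). if (x mod n + k) mod n = j then 1 else 0)"
    by (simp add: lessThan_atLeast0 mod_add_right_eq add.commute)
  finally show ?thesis using cartan_entry[OF xm j] by simp
qed

lemma telescope: "dv (xs a 0) (xs a 1) j =
   (\<Sum>t<K. (-1)^t * dv (xs a t) (xs a (Suc (Suc t))) j) + (-1)^K * dv (xs a K) (xs a (Suc K)) j"
proof (induction K)
  case 0 then show ?case by simp
next
  case (Suc K)
  have "dv (xs a K) (xs a (Suc (Suc K))) j = dv (xs a K) (xs a (Suc K)) j + dv (xs a (Suc K)) (xs a (Suc (Suc K))) j"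
    by (rule dv_add) (rule xs_mono)+
  then show ?case using Suc by (simp add: algebra_simps)
qed

definition Xm :: "rat mat" where
  "Xm = mat n n (\<lambda>(i, r). \<Sum>t<mu i. (-1)^t * (if xs i t mod n = r then 1 else 0))"

lemma Xm_C:
  assumes gl: "finite_gldim n c"
  shows "Xm * cartan n c = 1\<^sub>m n"
proof (rule eq_matI)
  show "dim_row (Xm * cartan n c) = dim_row (1\<^sub>m n)" by (simp add: Xm_def)
  show "dim_col (Xm * cartan n c) = dim_col (1\<^sub>m n)" by (simp add: cartan_def)
  fix i j assume i: "i < dim_row (1\<^sub>m n)" and j: "j < dim_col (1\<^sub>m n)"
  then have i: "i < n" and j: "j < n" by auto
  have "(Xm * cartan n c) $$ (i, j) = (\<Sum>r\<in>{0..<n}. Xm $$ (i, r) * cartan n c $$ (r, j))"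
    using i j by (simp add: Xm_def cartan_def scalar_prod_def)
  also have "\<dots> = (\<Sum>r\<in>{0..<n}. \<Sum>t<mu i. (-1)^t * (if xs i t mod n = r then cartan n c $$ (r, j) else 0))"
    using i by (auto simp: Xm_def sum_distrib_right intro!: sum.cong)
  also have "\<dots> = (\<Sum>t<mu i. \<Sum>r\<in>{0..<n}. (-1)^t * (if xs i t mod n = r then cartan n c $$ (r, j) else 0))"
    by (rule sum.swap)
  also have "\<dots> = (\<Sum>t<mu i. (-1)^t * cartan n c $$ (xs i t mod n, j))"
    using npos by (simp add: sum_distrib_left[symmetric])
  also have "\<dots> = (\<Sum>t<mu i. (-1)^t * dv (xs i t) (xs i (Suc (Suc t))) j)"
    using j by (simp add: cartan_dv)
  also have "\<dots> = dv (xs i 0) (xs i 1) j"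
    using telescope[of i j "mu i"] mu_props(1)[OF gl, of i] by (simp add: dv_def)
  also have "\<dots> = (if i = j then 1 else 0)"
    using i by (simp add: dv_def)
  finally show "(Xm * cartan n c) $$ (i, j) = 1\<^sub>m n $$ (i, j)" using i j by simp
qed

lemma Xm_rowsum:
  assumes "i < n"
  shows "(\<Sum>j<n. Xm $$ (i, j)) = (if odd (mu i) then 1 else 0)"
proof -
  have "(\<Sum>j<n. Xm $$ (i, j)) = (\<Sum>j<n. \<Sum>t<mu i. (-1)^t * (if xs i t mod n = j then 1 else 0))"
    using assms by (simp add: Xm_def)
  also have "\<dots> = (\<Sum>t<mu i. \<Sum>j<n. (-1)^t * (if xs i t mod n = j then 1 else 0))"
    by (rule sum.swap)
  also have "\<dots> = (\<Sum>t<mu i. (-1::rat)^t)"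
    using npos by (simp add: sum_distrib_left[symmetric])
  finally show ?thesis by (simp add: alt_sum)
qed

end

context kup begin

lemma Xm_carrier: "Xm \<in> carrier_mat n n" by (simp add: Xm_def)
lemma C_carrier: "cartan n c \<in> carrier_mat n n" by (simp add: cartan_def)

lemma C_Xm:
  assumes gl: "finite_gldim n c"
  shows "cartan n c * Xm = 1\<^sub>m n"
  by (rule mat_mult_left_right_inverse[OF Xm_carrier C_carrier Xm_C[OF gl]])

lemma C_invertible:
  assumes gl: "finite_gldim n c"
  shows "invertible_mat (cartan n c)"
  unfolding invertible_mat_def inverts_mat_def
  using C_Xm[OF gl] Xm_C[OF gl] C_carrier Xm_carrier by (auto simp: square_mat.simps)

lemma magnitude_Xm:
  assumes gl: "finite_gldim n c"
  shows "magnitude n c = (\<Sum>i<n. \<Sum>j<n. Xm $$ (i, j))"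
proof -
  let ?P = "\<lambda>B. B \<in> carrier_mat n n \<and> inverts_mat (cartan n c) B \<and> inverts_mat B (cartan n c)"
  have ex: "\<exists>B. ?P B"
    using C_Xm[OF gl] Xm_C[OF gl] C_carrier Xm_carrier by (auto simp: inverts_mat_def)
  define B where "B = (SOME B. ?P B)"
  have PB: "?P B" unfolding B_def using ex by (rule someI_ex)
  then have Bc: "B \<in> carrier_mat n n" and BC: "B * cartan n c = 1\<^sub>m n"
    by (auto simp: inverts_mat_def)
  have "B = B * (cartan n c * Xm)" using C_Xm[OF gl] Bc by simp
  also have "\<dots> = (B * cartan n c) * Xm" using Bc C_carrier Xm_carrier by (simp add: assoc_mult_mat)
  also have "\<dots> = Xm" using BC Xm_carrier by simp
  finally have "B = Xm" .
  then show ?thesis unfolding magnitude_def Let_def B_def by simp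
qed

definition Ev :: "nat set" where "Ev = {i. i < n \<and> odd (mu i)}"

lemma Ev_eq:
  assumes gl: "finite_gldim n c"
  shows "simples_even_pd n c = Ev"
proof -
  have "even (proj_dim n c (i, 1)) \<longleftrightarrow> odd (mu i)" if "i < n" for i
  proof -
    have "proj_dim n c (i, 1) = mu i - 1" using proj_dim_mu[OF gl, of i] that by simp
    then show ?thesis using mu_props(3)[OF gl, of i] by (cases "mu i") auto
  qed
  then show ?thesis unfolding simples_even_pd_def Ev_def by auto
qed

lemma magnitude_Ev:
  assumes gl: "finite_gldim n c"
  shows "magnitude n c = of_nat (card Ev)"
proof -
  have "magnitude n c = (\<Sum>i<n. if odd (mu i) then 1 else 0)"
    using magnitude_Xm[OF gl] Xm_rowsum by simp
  also have "\<dots> = of_nat (card {i\<in>{..<n}. odd (mu i)})"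
    by (rule card_filter_sum[symmetric]) simp
  also have "{i\<in>{..<n}. odd (mu i)} = Ev" unfolding Ev_def by auto
  finally show ?thesis .
qed

lemma Ev_window_base:
  assumes gl: "finite_gldim n c" and i: "i < n"
  shows "(\<Sum>k<c i. if (i + k) mod n \<in> Ev then 1 else 0) = (1::rat)"
proof -
  have "1 = (\<Sum>j<n. (cartan n c * Xm) $$ (i, j))"
    using C_Xm[OF gl] i by simp
  also have "\<dots> = (\<Sum>j<n. \<Sum>r<n. cartan n c $$ (i, r) * Xm $$ (r, j))"
    using i by (simp add: Xm_def cartan_def scalar_prod_def lessThan_atLeast0)
  also have "\<dots> = (\<Sum>r<n. cartan n c $$ (i, r) * (\<Sum>j<n. Xm $$ (r, j)))"
    unfolding sum_distrib_left by (rule sum.swap)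
  also have "\<dots> = (\<Sum>r<n. cartan n c $$ (i, r) * (if r \<in> Ev then 1 else 0))"
    by (rule sum.cong) (auto simp: Xm_rowsum Ev_def)
  also have "\<dots> = (\<Sum>r<n. \<Sum>k<c i. if (i + k) mod n = r then (if r \<in> Ev then 1 else 0) else 0)"
    by (rule sum.cong) (auto simp: cartan_entry i sum_distrib_right intro!: sum.cong)
  also have "\<dots> = (\<Sum>k<c i. \<Sum>r<n. if (i + k) mod n = r then (if r \<in> Ev then 1 else 0) else 0)"
    by (rule sum.swap)
  also have "\<dots> = (\<Sum>k<c i. if (i + k) mod n \<in> Ev then 1 else 0)"
    using npos by simp
  finally show ?thesis by simp
qed

definition Yw :: "nat \<Rightarrow> nat \<Rightarrow> rat" where
  "Yw a b = (\<Sum>s\<in>{a..<b}. if s mod n \<in> Ev then 1 else 0)"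

lemma Yw_F:
  assumes gl: "finite_gldim n c"
  shows "Yw x (F x) = 1"
proof -
  have xm: "x mod n < n" using npos by simp
  have "Yw x (F x) = (\<Sum>s\<in>{0 + x..<c (x mod n) + x}. if s mod n \<in> Ev then 1 else 0)"
    unfolding Yw_def F_def by (simp add: add.commute)
  also have "\<dots> = (\<Sum>k\<in>{0..<c (x mod n)}. if (k + x) mod n \<in> Ev then 1 else 0)"
    by (rule sum.shift_bounds_nat_ivl)
  also have "\<dots> = (\<Sum>k<c (x mod n). if (x mod n + k) mod n \<in> Ev then 1 else 0)"
    by (simp add: lessThan_atLeast0 mod_add_right_eq add.commute)
  also have "\<dots> = 1" by (rule Ev_window_base[OF gl xm])
  finally show ?thesis .
qed

lemma Yw_add: "a \<le> b \<Longrightarrow> b \<le> d \<Longrightarrow> Yw a d = Yw a b + Yw b d"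
  unfolding Yw_def by (simp add: sum.atLeastLessThan_concat)

lemma Yw_Fk:
  assumes gl: "finite_gldim n c"
  shows "Yw x ((F^^k) x) = of_nat k"
proof (induction k)
  case 0 then show ?case by (simp add: Yw_def)
next
  case (Suc k)
  have le1: "x \<le> (F^^k) x" using Fk_ge[of x k] by simp
  have le2: "(F^^k) x \<le> F ((F^^k) x)" using F_gt[of "(F^^k) x"] by simp
  have "Yw x ((F^^Suc k) x) = Yw x ((F^^k) x) + Yw ((F^^k) x) (F ((F^^k) x))"
    using Yw_add[OF le1 le2] by simp
  then show ?case using Suc Yw_F[OF gl] by simp
qed

lemma Yw_period: "Yw a (a + n) = of_nat (card Ev)"
proof (induction a)
  case 0
  have "Yw 0 (0 + n) = (\<Sum>s<n. if s \<in> Ev then 1 else 0)"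
    unfolding Yw_def by (auto simp: lessThan_atLeast0 intro!: sum.cong)
  also have "\<dots> = of_nat (card {s\<in>{..<n}. s \<in> Ev})" by (rule card_filter_sum[symmetric]) simp
  also have "{s\<in>{..<n}. s \<in> Ev} = Ev" by (auto simp: Ev_def)
  finally show ?case .
next
  case (Suc a)
  have "Yw a (Suc a + n) = Yw a (Suc a) + Yw (Suc a) (Suc a + n)" by (rule Yw_add) auto
  moreover have "Yw a (Suc a + n) = Yw a (a + n) + Yw (a + n) (Suc a + n)" by (rule Yw_add) auto
  moreover have "Yw a (Suc a) = Yw (a + n) (Suc a + n)" by (simp add: Yw_def)
  ultimately show ?case using Suc by simp
qed

end

context kup begin

abbreviation cyc where "cyc \<equiv> cyclic_vertices n c"
definition inV :: "nat \<Rightarrow> bool" where "inV x \<longleftrightarrow> x mod n \<in> cyc"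

lemma res_lt: "res_map n c i < n" using npos by (simp add: res_map_def)

lemma cyc_res: "r \<in> cyc \<Longrightarrow> res_map n c r \<in> cyc"
proof -
  assume "r \<in> cyc"
  then obtain k where k: "k \<ge> 1" "(res_map n c ^^ k) r = r" unfolding cyclic_vertices_def by auto
  have "(res_map n c ^^ k) (res_map n c r) = res_map n c r"
    using k by (metis funpow_swap1)
  then show ?thesis using k res_lt unfolding cyclic_vertices_def by auto
qed

lemma inV_F: "inV x \<Longrightarrow> inV (F x)"
  unfolding inV_def using cyc_res F_mod by simp

lemma inV_Fk: "inV x \<Longrightarrow> inV ((F^^k) x)"
  by (induction k) (auto intro: inV_F)

lemma cyc_period: "r \<in> cyc \<Longrightarrow> \<exists>p\<ge>1. \<forall>m. (res_map n c ^^ (p * m)) r = r"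
proof -
  assume "r \<in> cyc"
  then obtain p where p: "p \<ge> 1" "(res_map n c ^^ p) r = r" unfolding cyclic_vertices_def by auto
  have "(res_map n c ^^ (p * m)) r = r" for m
  proof (induction m)
    case (Suc m)
    have "(res_map n c ^^ (p * Suc m)) r = (res_map n c ^^ p) ((res_map n c ^^ (p * m)) r)"
      by (simp add: funpow_add)
    then show ?case using Suc p by simp
  qed simp
  then show ?thesis using p by blast
qed

lemma merge_later: "(F^^k) a = (F^^k) b \<Longrightarrow> (F^^(m + k)) a = (F^^(m + k)) b"
  by (simp add: funpow_add)

lemma never_merge:
  assumes u: "inV u" and v: "inV v" and eq: "(F^^k) u = (F^^k) v"
  shows "u = v"
proof -
  obtain pu where pu: "pu \<ge> 1" "\<forall>m. (res_map n c ^^ (pu * m)) (u mod n) = u mod n"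
    using cyc_period u unfolding inV_def by blast
  obtain pv where pv: "pv \<ge> 1" "\<forall>m. (res_map n c ^^ (pv * m)) (v mod n) = v mod n"
    using cyc_period v unfolding inV_def by blast
  define M where "M = pu * pv * k"
  have Mk: "k \<le> M" unfolding M_def using pu pv by simp
  have eqM: "(F^^M) u = (F^^M) v" using merge_later[OF eq, of "M - k"] Mk by simp
  have "(F^^M) u mod n = u mod n" using Fk_mod pu(2)[rule_format, of "pv * k"]
    unfolding M_def by (simp add: mult.assoc)
  moreover have "(F^^M) v mod n = v mod n" using Fk_mod pv(2)[rule_format, of "pu * k"]
    unfolding M_def by (simp add: mult.commute mult.left_commute)
  ultimately have mm: "u mod n = v mod n" using eqM by simp
  have "(F^^M) u = (F^^M) (u mod n) + (u div n) * n"
    using Fk_shift[of M "u mod n" "u div n"] by simp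
  moreover have "(F^^M) v = (F^^M) (v mod n) + (v div n) * n"
    using Fk_shift[of M "v mod n" "v div n"] by simp
  ultimately have "u div n = v div n" using eqM mm npos by simp
  then show "u = v" using mm by (metis div_mult_mod_eq)
qed

lemma xs_pow: "xs a (2 * k) = (F^^k) a \<and> xs a (Suc (2 * k)) = (F^^k) (Suc a)"
proof (induction k)
  case (Suc k)
  have "xs a (2 * Suc k) = F (xs a (2 * k))" by (simp add: numeral_2_eq_2)
  moreover have "xs a (Suc (2 * Suc k)) = F (xs a (Suc (2 * k)))" by (simp add: numeral_2_eq_2)
  ultimately show ?case using Suc by simp
qed simp

lemma no_between:
  assumes gl: "finite_gldim n c" and v: "inV v" and u: "inV u" and vu: "v \<le> u" and uF: "u < F v"
  shows "u = v"
proof (rule ccontr)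
  assume "u \<noteq> v"
  define S where "S = {x. v \<le> x \<and> x \<le> u \<and> (\<exists>k. (F^^k) x = (F^^k) v)}"
  have finS: "finite S" unfolding S_def by (rule finite_subset[of _ "{..u}"]) auto
  have vS: "v \<in> S" unfolding S_def using vu by auto
  define i where "i = Max S"
  have iS: "i \<in> S" unfolding i_def using Max_in[OF finS] vS by blast
  have uS: "u \<notin> S" unfolding S_def using never_merge[OF u v] \<open>u \<noteq> v\<close> by auto
  have "i \<le> u" using iS unfolding S_def by simp
  moreover have "i \<noteq> u" using iS uS by auto
  ultimately have iu: "i < u" by simp
  have SiS: "Suc i \<notin> S"
  proof
    assume "Suc i \<in> S"
    then have "Suc i \<le> i" unfolding i_def by (rule Max_ge[OF finS])
    then show False by simp
  qed
  obtain k0 where k0: "(F^^k0) i = (F^^k0) v" using iS unfolding S_def by auto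
  have vi: "v \<le> i" using iS unfolding S_def by auto
  have A: "(F^^k) i \<noteq> (F^^k) (Suc i)" for k
  proof
    assume h: "(F^^k) i = (F^^k) (Suc i)"
    have e1: "(F^^(k0 + k)) (Suc i) = (F^^(k0 + k)) i" using merge_later[OF h[symmetric], of k0] by simp
    have e2: "(F^^(k + k0)) i = (F^^(k + k0)) v" using merge_later[OF k0, of k] .
    have "(F^^(k0 + k)) (Suc i) = (F^^(k0 + k)) v" using e1 e2 by (simp only: add.commute)
    then have "\<exists>k. (F^^k) (Suc i) = (F^^k) v" by blast
    moreover have "v \<le> Suc i" "Suc i \<le> u" using vi iu by auto
    ultimately have "Suc i \<in> S" unfolding S_def by blast
    then show False using SiS by simp
  qed
  have B: "(F^^k) (Suc i) < (F^^Suc k) i" for k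
  proof -
    have Fvu: "F v \<noteq> u" using uF by simp
    have ne: "(F^^k) (F v) \<noteq> (F^^k) u" using never_merge[OF inV_F[OF v] u] Fvu by blast
    have "(F^^k) (Suc i) \<le> (F^^k) u" using iu by (intro Fk_mono) simp
    also have "(F^^k) u < (F^^k) (F v)" using ne Fk_mono[of u "F v" k] uF by simp
    also have "(F^^k) (F v) \<le> (F^^k) (F i)" using F_mono[OF vi] by (rule Fk_mono)
    also have "(F^^k) (F i) = (F^^Suc k) i" by (simp add: funpow_swap1)
    finally show ?thesis .
  qed
  have "xs i t \<noteq> xs i (Suc t)" for t
  proof (cases "even t")
    case True
    then obtain k where "t = 2 * k" by (rule evenE)
    then show ?thesis using A[of k] xs_pow[of i k] by simp
  next
    case False
    then obtain k where t0: "t = 2 * k + 1" by (rule oddE)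
    then have t: "t = Suc (2 * k)" by simp
    have "Suc t = 2 * Suc k" using t by simp
    then show ?thesis using B[of k] xs_pow[of i k] xs_pow[of i "Suc k"] t by simp
  qed
  then show False using gl_merge[OF gl, of i] by blast
qed

lemma reach:
  assumes gl: "finite_gldim n c" and v0: "inV v0" and u: "inV u" and le: "v0 \<le> u"
  shows "\<exists>j. (F^^j) v0 = u"
proof -
  have ex: "\<exists>j. u < (F^^Suc j) v0" using Fk_ge[of v0 "Suc u"] by (intro exI[of _ u]) simp
  define j where "j = (LEAST j. u < (F^^Suc j) v0)"
  have j1: "u < (F^^Suc j) v0" unfolding j_def using ex by (rule LeastI_ex)
  have j2: "(F^^j) v0 \<le> u"
  proof (cases j)
    case 0 then show ?thesis using le by simp
  next
    case (Suc j')
    then have "j' < j" by simp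
    then have "\<not> u < (F^^Suc j') v0" unfolding j_def by (rule not_less_Least)
    then show ?thesis using Suc by simp
  qed
  have "u = (F^^j) v0" using no_between[OF gl inV_Fk[OF v0] u j2] j1 by simp
  then show ?thesis by blast
qed

lemma cyc_nonempty: "\<exists>r. r \<in> cyc"
proof -
  let ?f = "\<lambda>k. (res_map n c ^^ k) 0"
  have img: "?f ` {..n} \<subseteq> {..<n}"
  proof
    fix y assume "y \<in> ?f ` {..n}"
    then obtain k where y: "y = ?f k" by auto
    show "y \<in> {..<n}" using y npos res_lt by (cases k) auto
  qed
  have "\<not> inj_on ?f {..n}"
  proof
    assume "inj_on ?f {..n}"
    then have "card {..n} \<le> card {..<n}" using card_inj_on_le img by blast
    then show False by simp
  qed
  then obtain a b where ab: "a \<le> n" "b \<le> n" "a \<noteq> b" "?f a = ?f b"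
    unfolding inj_on_def by auto
  have key: "?f a \<in> cyc" if ab: "a < b" "?f a = ?f b" for a b
  proof -
    have "(res_map n c ^^ (b - a)) (?f a) = (res_map n c ^^ (b - a + a)) 0" by (simp only: funpow_add comp_def)
    also have "b - a + a = b" using ab by simp
    finally have "(res_map n c ^^ (b - a)) (?f a) = ?f b" .
    then have fx: "(res_map n c ^^ (b - a)) (?f a) = ?f a" using ab(2) by (simp only:)
    have lt: "?f a < n" using npos res_lt by (cases a) auto
    have ba: "b - a \<ge> 1" using ab(1) by simp
    have "\<exists>k\<ge>1. (res_map n c ^^ k) (?f a) = ?f a" using fx ba by blast
    with lt
    show "?f a \<in> cyc" unfolding cyclic_vertices_def by blast
  qed
  show ?thesis
  proof (cases "a < b")
    case True then show ?thesis using key[of a b] ab by blast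
  next
    case False then have "b < a" using ab by simp
    then show ?thesis using key[of b a] ab by metis
  qed
qed

lemma card_cyc_Ev:
  assumes gl: "finite_gldim n c"
  shows "card cyc = card Ev"
proof -
  obtain v0 where v0c: "v0 \<in> cyc" using cyc_nonempty by blast
  have v0n: "v0 < n" using v0c unfolding cyclic_vertices_def by auto
  have v0: "inV v0" using v0c v0n unfolding inV_def by simp
  have vn: "inV (v0 + n)" using v0 unfolding inV_def by simp
  obtain P where P: "(F^^P) v0 = v0 + n" using reach[OF gl v0 vn] by auto
  have "cyc = (\<lambda>j. (F^^j) v0 mod n) ` {..<P}"
  proof
    show "(\<lambda>j. (F^^j) v0 mod n) ` {..<P} \<subseteq> cyc"
      using inV_Fk[OF v0] unfolding inV_def by auto
    show "cyc \<subseteq> (\<lambda>j. (F^^j) v0 mod n) ` {..<P}"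
    proof
      fix r assume r: "r \<in> cyc"
      have rn: "r < n" using r unfolding cyclic_vertices_def by auto
      define u where "u = (if v0 \<le> r then r else r + n)"
      have u1: "v0 \<le> u" "u < v0 + n" using v0n rn unfolding u_def by auto
      have u2: "u mod n = r" using rn unfolding u_def by auto
      have "inV u" unfolding inV_def using u2 r by simp
      then obtain j where j: "(F^^j) v0 = u" using reach[OF gl v0] u1 by blast
      have "j < P"
      proof (rule ccontr)
        assume "\<not> j < P"
        then have "(F^^P) v0 \<le> (F^^j) v0" using Fk_strict[of P j v0] by (cases "P = j") auto
        then show False using j P u1 by simp
      qed
      then show "r \<in> (\<lambda>j. (F^^j) v0 mod n) ` {..<P}" using j u2 by auto
    qed
  qed
  moreover have "inj_on (\<lambda>j. (F^^j) v0 mod n) {..<P}"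
  proof (rule inj_onI)
    fix a b assume a: "a \<in> {..<P}" and b: "b \<in> {..<P}" and eq: "(F^^a) v0 mod n = (F^^b) v0 mod n"
    show "a = b"
    proof (rule ccontr)
      assume "a \<noteq> b"
      then consider "a < b" | "b < a" by linarith
      then show False
      proof cases
        case 1
        have l1: "(F^^a) v0 < (F^^b) v0" using Fk_strict[OF 1] .
        have l2: "(F^^b) v0 < v0 + n" using Fk_strict[of b P v0] b P by simp
        have l3: "v0 \<le> (F^^a) v0" using Fk_ge[of v0 a] by simp
        have "n dvd (F^^b) v0 - (F^^a) v0" using eq l1 mod_eq_dvd_iff_nat[of "(F^^a) v0" "(F^^b) v0" n] by simp
        then have "n \<le> (F^^b) v0 - (F^^a) v0" using l1 by (intro dvd_imp_le) auto
        then show False using l1 l2 l3 by linarith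
      next
        case 2
        have l1: "(F^^b) v0 < (F^^a) v0" using Fk_strict[OF 2] .
        have l2: "(F^^a) v0 < v0 + n" using Fk_strict[of a P v0] a P by simp
        have l3: "v0 \<le> (F^^b) v0" using Fk_ge[of v0 b] by simp
        have "n dvd (F^^a) v0 - (F^^b) v0" using eq l1 mod_eq_dvd_iff_nat[of "(F^^b) v0" "(F^^a) v0" n] by simp
        then have "n \<le> (F^^a) v0 - (F^^b) v0" using l1 by (intro dvd_imp_le) auto
        then show False using l1 l2 l3 by linarith
      qed
    qed
  qed
  ultimately have cc: "card cyc = P" by (simp add: card_image)
  have "(of_nat P :: rat) = Yw v0 (v0 + n)" using Yw_Fk[OF gl, of v0 P] P by simp
  also have "\<dots> = of_nat (card Ev)" by (rule Yw_period)
  finally show ?thesis using cc by simp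
qed

end


lemma kup_of_nakayama:
  assumes "nakayama_kupisch n c"
  shows "kup n c"
proof (cases "kupisch_linear n c")
  case True
  then have n1: "n \<ge> 1" and cl: "c (n - 1) = 1"
    and st: "\<And>i. i < n - 1 \<Longrightarrow> c i \<ge> 2 \<and> c (Suc i) + 1 \<ge> c i"
    unfolding kupisch_linear_def by auto
  show ?thesis
  proof
    show "0 < n" using n1 by simp
  next
    fix i assume i: "i < n"
    show "1 \<le> c i"
    proof (cases "i < n - 1")
      case True then show ?thesis using st[of i] by simp
    next
      case False then have "i = n - 1" using i by simp
      then show ?thesis using cl by simp
    qed
  next
    fix i assume i: "i < n"
    show "c i \<le> c (Suc i mod n) + 1"
    proof (cases "i < n - 1")
      case True
      then have "Suc i mod n = Suc i" by simp
      then show ?thesis using st[OF True] by simp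
    next
      case False then have "i = n - 1" using i by simp
      then show ?thesis using cl by simp
    qed
  qed
next
  case False
  then have "kupisch_cyclic n c" using assms unfolding nakayama_kupisch_def by simp
  then have n1: "n \<ge> 1" and st: "\<And>i. i < n \<Longrightarrow> c i \<ge> 2 \<and> c (Suc i mod n) + 1 \<ge> c i"
    unfolding kupisch_cyclic_def by auto
  show ?thesis
  proof
    show "0 < n" using n1 by simp
  next
    fix i assume "i < n" then show "1 \<le> c i" using st[of i] by simp
  next
    fix i assume "i < n" then show "c i \<le> c (Suc i mod n) + 1" using st[of i] by simp
  qed
qed

theorem proposition4p2:
  fixes n :: nat and c :: "nat \<Rightarrow> nat"
  assumes "nakayama_kupisch n c"
    and "finite_gldim n c"
  shows "invertible_mat (cartan n c)
     \<and> magnitude n c = of_nat (card (simples_even_pd n c))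
     \<and> magnitude n c = of_nat (card (cyclic_vertices n c))"
proof -
  interpret kup n c by (rule kup_of_nakayama[OF assms(1)])
  have 1: "invertible_mat (cartan n c)" by (rule C_invertible[OF assms(2)])
  have 2: "magnitude n c = of_nat (card (simples_even_pd n c))"
    using magnitude_Ev[OF assms(2)] Ev_eq[OF assms(2)] by simp
  have 3: "magnitude n c = of_nat (card (cyclic_vertices n c))"
    using magnitude_Ev[OF assms(2)] card_cyc_Ev[OF assms(2)] by simp
  show ?thesis using 1 2 3 by blast
qed


end
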